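(* In the setting described in the context, for every $k\in\{1,\dots,p\}$ the function $\delta_k$ belongs to $\mathcal F$, and for every $k\in\{2,\dots,p\}$ the function $f_k$ belongs to $\mathcal F$.
   Context: Let $p\ge1$, $\bar{\boldsymbol y}\in\mathbb R^p$, weights $n_1,\dots,n_p\ge1$, and $\tilde\lambda_0,\tilde\lambda\ge0$. For $i\in[p]$ let $e_i(x)=-\frac{n_i}{2}(x-\bar y_i)^2+\tilde\lambda_0\mathbf 1(x=0)$, $x\in\mathbb R$ ($\mathbf 1$ the indicator). Define recursively $\delta_1=e_1$ and, for $k=2,\dots,p$, $f_k(b)=\sup_{\tilde b\in\mathbb R}\big[\delta_{k-1}(\tilde b)-\tilde\lambda\mathbf 1(b\ne\tilde b)\big]$ (equivalently $\max\{\delta_{k-1}(b),\sup_{\tilde b}\delta_{k-1}(\tilde b)-\tilde\lambda\}$) and $\delta_k=e_k+f_k$. Let $\mathcal Q$ be the set of piecewise quadratic functions $x\mapsto\sum_{i=1}^{m+1}\mathbf 1(x\in(x_{i-1},x_i])(a_ix^2+b_ix+c_i)$ with $m\ge0$, $-\infty=x_0\le x_1\le\dots\le x_{m+1}=\infty$ and real $a_i,b_i,c_i$. Let $\mathcal S$ be the set of positive spike functions $x\mapsto\sum_{i=1}^{m}s_i\mathbf 1(x=x_i)$ with $m\ge0$, $x_i\in\mathbb R$, $s_i>0$. Let $\mathcal F=\{Q+S:Q\in\mathcal Q,S\in\mathcal S\}$. *)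

theory Defs
  imports Complex_Main "HOL-Library.Extended_Real"
begin

text \<open>Indices are 1-based: \<open>ybar i\<close>, \<open>nw i\<close> for \<open>i \<in> {1..p}\<close>.\<close>

definition e_fn :: "(nat \<Rightarrow> nat) \<Rightarrow> (nat \<Rightarrow> real) \<Rightarrow> real \<Rightarrow> nat \<Rightarrow> real \<Rightarrow> real" where
  "e_fn nw ybar lam0 i x =
     - (real (nw i) / 2) * (x - ybar i)^2 + lam0 * (if x = 0 then 1 else 0)"

definition fstep :: "real \<Rightarrow> (real \<Rightarrow> real) \<Rightarrow> real \<Rightarrow> real" where
  "fstep lam d b = (SUP bt. d bt - lam * (if b \<noteq> bt then 1 else 0))"

text \<open>\<open>delta_fn \<dots> k\<close> is \<open>\<delta>_k\<close> for \<open>k \<ge> 1\<close>; the value at \<open>k = 0\<close> is an unused dummy.\<close>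
fun delta_fn :: "(nat \<Rightarrow> nat) \<Rightarrow> (nat \<Rightarrow> real) \<Rightarrow> real \<Rightarrow> real \<Rightarrow> nat \<Rightarrow> real \<Rightarrow> real" where
  "delta_fn nw ybar lam0 lam 0 = (\<lambda>x. 0)"
| "delta_fn nw ybar lam0 lam (Suc 0) = e_fn nw ybar lam0 1"
| "delta_fn nw ybar lam0 lam (Suc (Suc j)) =
     (\<lambda>x. e_fn nw ybar lam0 (Suc (Suc j)) x + fstep lam (delta_fn nw ybar lam0 lam (Suc j)) x)"

definition f_fn :: "(nat \<Rightarrow> nat) \<Rightarrow> (nat \<Rightarrow> real) \<Rightarrow> real \<Rightarrow> real \<Rightarrow> nat \<Rightarrow> real \<Rightarrow> real" where
  "f_fn nw ybar lam0 lam k = fstep lam (delta_fn nw ybar lam0 lam (k - 1))"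

definition PQ :: "(real \<Rightarrow> real) set" where
  "PQ = {g. \<exists>(m::nat) (xs::nat \<Rightarrow> ereal) (a::nat \<Rightarrow> real) b c.
      xs 0 = -\<infinity> \<and> xs (m+1) = \<infinity> \<and> (\<forall>i\<in>{1..m}. \<bar>xs i\<bar> \<noteq> \<infinity>) \<and>
      (\<forall>i\<le>m. xs i \<le> xs (Suc i)) \<and>
      (\<forall>x. g x = (\<Sum>i=1..m+1. (if ereal x \<in> {xs (i-1)<..xs i} then 1 else 0)
                                   * (a i * x^2 + b i * x + c i)))}"

definition PS :: "(real \<Rightarrow> real) set" where
  "PS = {g. \<exists>(m::nat) (xs::nat \<Rightarrow> real) (s::nat \<Rightarrow> real).
      (\<forall>i\<in>{1..m}. s i > 0) \<and>
      (\<forall>x. g x = (\<Sum>i=1..m. s i * (if x = xs i then 1 else 0)))}"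

definition PF :: "(real \<Rightarrow> real) set" where
  "PF = {g. \<exists>q\<in>PQ. \<exists>s\<in>PS. g = (\<lambda>x. q x + s x)}"

end

theory Submission
  imports Defs
begin

inductive_set PQI :: "(real \<Rightarrow> real) set" where
  quad: "(\<lambda>x. a*x^2 + b*x + c) \<in> PQI"
| splice: "g1 \<in> PQI \<Longrightarrow> g2 \<in> PQI \<Longrightarrow> (\<lambda>x. if x \<le> t then g1 x else g2 x) \<in> PQI"

lemma PQI_const: "(\<lambda>x. c) \<in> PQI"
  using PQI.quad[of 0 0 c] by simp

lemma PQI_add_quad: "h \<in> PQI \<Longrightarrow> (\<lambda>x. (a*x^2 + b*x + c) + h x) \<in> PQI"
proof (induction rule: PQI.induct)
  case (quad a' b' c')
  have "(\<lambda>x. (a*x^2 + b*x + c) + (a'*x^2 + b'*x + c')) = (\<lambda>x. (a+a')*x^2 + (b+b')*x + (c+c'))"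
    by (auto simp: algebra_simps)
  then show ?case using PQI.quad by metis
next
  case (splice g1 g2 t)
  have "(\<lambda>x. (a*x^2 + b*x + c) + (if x \<le> t then g1 x else g2 x)) =
     (\<lambda>x. if x \<le> t then (a*x^2 + b*x + c) + g1 x else (a*x^2 + b*x + c) + g2 x)" by auto
  then show ?case using PQI.splice[OF splice.IH] by simp
qed

lemma PQI_add: "g \<in> PQI \<Longrightarrow> h \<in> PQI \<Longrightarrow> (\<lambda>x. g x + h x) \<in> PQI"
proof (induction rule: PQI.induct)
  case (quad a b c)
  then show ?case using PQI_add_quad by blast
next
  case (splice g1 g2 t)
  have "(\<lambda>x. (if x \<le> t then g1 x else g2 x) + h x) =
     (\<lambda>x. if x \<le> t then g1 x + h x else g2 x + h x)" by auto
  then show ?case using PQI.splice[OF splice.IH] splice.prems by simp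
qed

definition signc :: "(real \<Rightarrow> real) \<Rightarrow> real set \<Rightarrow> bool" where
  "signc d I \<longleftrightarrow> (\<forall>x\<in>I. 0 \<le> d x) \<or> (\<forall>x\<in>I. d x \<le> 0)"

lemma quad_factored_sign:
  fixes a r1 r2 :: real
  assumes "r1 \<le> r2" "\<forall>x. d x = a * ((x - r1) * (x - r2))"
  shows "signc d {..r1} \<and> signc d {r1<..r2} \<and> signc d {r2<..}"
proof -
  have A: "(x - r1) * (x - r2) \<ge> 0" if "x \<le> r1" for x using that assms(1) by (intro mult_nonpos_nonpos) auto
  have B: "(x - r1) * (x - r2) \<le> 0" if "r1 < x" "x \<le> r2" for x using that by (intro mult_nonneg_nonpos) auto
  have C: "(x - r1) * (x - r2) \<ge> 0" if "r2 < x" for x using that assms(1) by (intro mult_nonneg_nonneg) auto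
  show ?thesis
  proof (cases "a \<ge> 0")
    case True
    then show ?thesis unfolding signc_def using A B C assms(2)
      by (auto intro!: mult_nonneg_nonneg mult_nonneg_nonpos)
  next
    case False
    then have a: "a \<le> 0" by simp
    have "\<forall>x\<in>{..r1}. d x \<le> 0" "\<forall>x\<in>{r1<..r2}. 0 \<le> d x" "\<forall>x\<in>{r2<..}. d x \<le> 0"
      using mult_nonpos_nonneg[OF a A] mult_nonpos_nonpos[OF a B] mult_nonpos_nonneg[OF a C] assms(2)
      by auto
    then show ?thesis unfolding signc_def by blast
  qed
qed

lemma quad_sign:
  fixes a b e :: real
  shows "\<exists>r1 r2. r1 \<le> r2 \<and> signc (\<lambda>x. a*x^2+b*x+e) {..r1} \<and> signc (\<lambda>x. a*x^2+b*x+e) {r1<..r2}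
     \<and> signc (\<lambda>x. a*x^2+b*x+e) {r2<..}"
proof (cases "a = 0")
  case True
  show ?thesis
  proof (cases "b = 0")
    case True
    then have "signc (\<lambda>x. a*x^2+b*x+e) I" for I using \<open>a=0\<close> unfolding signc_def by auto
    then show ?thesis by blast
  next
    case False
    define r where "r = -e/b"
    have d: "a*x^2+b*x+e = b*(x-r)" for x using \<open>a=0\<close> False by (simp add: r_def field_simps)
    have "signc (\<lambda>x. a*x^2+b*x+e) {..r}" "signc (\<lambda>x. a*x^2+b*x+e) {r<..r}"
       "signc (\<lambda>x. a*x^2+b*x+e) {r<..}"
      unfolding signc_def d using False
      by (auto simp: zero_le_mult_iff mult_le_0_iff)
    then show ?thesis by blast
  qed
next
  case False
  define D where "D = b^2 - 4*a*e"
  have id: "4*a*(a*x^2+b*x+e) = (2*a*x+b)^2 - D" for x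
    by (simp add: D_def power2_eq_square algebra_simps)
  show ?thesis
  proof (cases "D < 0")
    case True
    have pos: "0 < a * (a*x^2+b*x+e)" for x
    proof -
      have "0 \<le> (2*a*x+b)^2" by simp
      then show ?thesis using id[of x] True by linarith
    qed
    have "signc (\<lambda>x. a*x^2+b*x+e) I" for I
      unfolding signc_def using pos False
      by (cases "a > 0") (auto simp: zero_less_mult_iff intro: less_imp_le)
    then show ?thesis by blast
  next
    case nD: False
    define s where "s = sqrt D"
    have s2: "s^2 = D" using nD by (simp add: s_def)
    define p1 where "p1 = (-b - s)/(2*a)"
    define p2 where "p2 = (-b + s)/(2*a)"
    have fac: "a*x^2+b*x+e = a*((x-p1)*(x-p2))" for x
    proof -
      have "4*a*(a*((x-p1)*(x-p2))) = (2*a*x+b)^2 - s^2"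
        using False by (simp add: p1_def p2_def field_simps power2_eq_square)
      then have "4*a*(a*((x-p1)*(x-p2))) = 4*a*(a*x^2+b*x+e)" using id[of x] s2 by simp
      then show ?thesis using False by simp
    qed
    have fac2: "a*x^2+b*x+e = a*((x - min p1 p2)*(x - max p1 p2))" for x
      using fac[of x] by (cases "p1 \<le> p2") (auto simp: min_def max_def algebra_simps)
    have "\<forall>x. (\<lambda>x. a*x^2+b*x+e) x = a*((x - min p1 p2)*(x - max p1 p2))"
      using fac2 by simp
    from quad_factored_sign[OF _ this] show ?thesis
      by (intro exI[of _ "min p1 p2"] exI[of _ "max p1 p2"]) simp
  qed
qed

lemma PQI_max: "g \<in> PQI \<Longrightarrow> (\<lambda>x. max (g x) c) \<in> PQI"
proof (induction rule: PQI.induct)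
  case (quad a b cc)
  obtain r1 r2 where r: "r1 \<le> r2" "signc (\<lambda>x. a*x^2+b*x+(cc-c)) {..r1}"
    "signc (\<lambda>x. a*x^2+b*x+(cc-c)) {r1<..r2}" "signc (\<lambda>x. a*x^2+b*x+(cc-c)) {r2<..}"
    using quad_sign[of a b "cc-c"] by (elim exE conjE) blast
  have key: "\<exists>P\<in>PQI. \<forall>x\<in>I. max (a*x^2+b*x+cc) c = P x"
    if "signc (\<lambda>x. a*x^2+b*x+(cc-c)) I" for I
  proof (cases "\<forall>x\<in>I. 0 \<le> a*x^2+b*x+(cc-c)")
    case True
    then have "\<forall>x\<in>I. max (a*x^2+b*x+cc) c = a*x^2+b*x+cc" by (auto simp: max_def)
    then show ?thesis by (intro bexI[OF _ PQI.quad[of a b cc]]) simp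
  next
    case False then have "\<forall>x\<in>I. a*x^2+b*x+(cc-c) \<le> 0" using that unfolding signc_def by blast
    then have "\<forall>x\<in>I. max (a*x^2+b*x+cc) c = c" by (auto simp: max_def)
    then show ?thesis by (intro bexI[OF _ PQI_const[of c]]) simp
  qed
  obtain P1 where P1: "P1 \<in> PQI" "\<forall>x\<in>{..r1}. max (a*x^2+b*x+cc) c = P1 x" using key[OF r(2)] by (elim bexE) blast
  obtain P2 where P2: "P2 \<in> PQI" "\<forall>x\<in>{r1<..r2}. max (a*x^2+b*x+cc) c = P2 x" using key[OF r(3)] by (elim bexE) blast
  obtain P3 where P3: "P3 \<in> PQI" "\<forall>x\<in>{r2<..}. max (a*x^2+b*x+cc) c = P3 x" using key[OF r(4)] by (elim bexE) blast
  have "(\<lambda>x. max (a*x^2+b*x+cc) c) = (\<lambda>x. if x \<le> r1 then P1 x else (\<lambda>x. if x \<le> r2 then P2 x else P3 x) x)"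
  proof
    fix x
    show "max (a*x^2+b*x+cc) c = (if x \<le> r1 then P1 x else (\<lambda>x. if x \<le> r2 then P2 x else P3 x) x)"
    proof (cases "x \<le> r1")
      case True then show ?thesis using P1(2) by simp
    next
      case False
      then show ?thesis using P2(2) P3(2) by (cases "x \<le> r2") auto
    qed
  qed
  then show ?case using PQI.splice[OF P1(1) PQI.splice[OF P2(1) P3(1)]] by simp
next
  case (splice g1 g2 t)
  have "(\<lambda>x. max (if x \<le> t then g1 x else g2 x) c) = (\<lambda>x. if x \<le> t then max (g1 x) c else max (g2 x) c)"
    by (simp add: fun_eq_iff)
  then show ?case using PQI.splice[OF splice.IH] by simp
qed

definition rep :: "nat \<Rightarrow> (nat \<Rightarrow> ereal) \<Rightarrow> (nat \<Rightarrow> real) \<Rightarrow> (nat \<Rightarrow> real) \<Rightarrow> (nat \<Rightarrow> real) \<Rightarrow> (real \<Rightarrow> real) \<Rightarrow> bool" where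
  "rep m xs a b c g \<longleftrightarrow> xs 0 = -\<infinity> \<and> xs (m+1) = \<infinity> \<and> (\<forall>i\<in>{1..m}. \<bar>xs i\<bar> \<noteq> \<infinity>) \<and>
      (\<forall>i\<le>m. xs i \<le> xs (Suc i)) \<and>
      (\<forall>x i. i \<in> {1..m+1} \<longrightarrow> ereal x \<in> {xs (i-1)<..xs i} \<longrightarrow> g x = a i * x^2 + b i * x + c i)"

lemma mono_xs:
  fixes xs :: "nat \<Rightarrow> ereal"
  assumes "\<forall>i\<le>m. xs i \<le> xs (Suc i)" "i \<le> j" "j \<le> m+1" shows "xs i \<le> xs j"
  using assms(2,3)
proof (induction j)
  case 0 then show ?case by simp
next
  case (Suc j)
  show ?case
  proof (cases "i = Suc j")
    case False
    then have "xs i \<le> xs j" using Suc by auto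
    moreover have "xs j \<le> xs (Suc j)" using assms(1) Suc.prems by auto
    ultimately show ?thesis by (rule order.trans)
  qed simp
qed

lemma uniq_int:
  fixes xs :: "nat \<Rightarrow> ereal"
  assumes "\<forall>i\<le>m. xs i \<le> xs (Suc i)" "i \<in> {1..m+1}" "j \<in> {1..m+1}"
    "ereal x \<in> {xs (i-1)<..xs i}" "ereal x \<in> {xs (j-1)<..xs j}"
  shows "i = j"
proof (rule ccontr)
  assume "i \<noteq> j"
  then consider "i < j" | "j < i" by linarith
  then show False
  proof cases
    case 1
    then have "xs i \<le> xs (j-1)" using mono_xs[OF assms(1), of i "j-1"] assms by auto
    then show False using assms(4,5) by auto
  next
    case 2
    then have "xs j \<le> xs (i-1)" using mono_xs[OF assms(1), of j "i-1"] assms by auto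
    then show False using assms(4,5) by auto
  qed
qed

lemma exist_int:
  fixes xs :: "nat \<Rightarrow> ereal"
  assumes "xs 0 = -\<infinity>" "xs (m+1) = \<infinity>"
  shows "\<exists>i\<in>{1..m+1}. ereal x \<in> {xs (i-1)<..xs i}"
proof -
  define i where "i = (LEAST i. ereal x \<le> xs i)"
  have h: "ereal x \<le> xs (m+1)" using assms by simp
  then have i1: "ereal x \<le> xs i" unfolding i_def by (rule LeastI)
  have i2: "i \<le> m+1" unfolding i_def using h by (rule Least_le)
  have "i \<noteq> 0" using i1 assms(1) by (cases "i = 0") auto
  then have "i - 1 < i" by simp
  then have "\<not> ereal x \<le> xs (i-1)" using not_less_Least[of "i-1" "\<lambda>i. ereal x \<le> xs i"] unfolding i_def by blast
  then show ?thesis using i1 i2 \<open>i \<noteq> 0\<close> by (intro bexI[of _ i]) auto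
qed

lemma sum_eval:
  fixes xs :: "nat \<Rightarrow> ereal"
  assumes "\<forall>i\<le>m. xs i \<le> xs (Suc i)" "i \<in> {1..m+1}" "ereal x \<in> {xs (i-1)<..xs i}"
  shows "(\<Sum>j=1..m+1. (if ereal x \<in> {xs (j-1)<..xs j} then 1 else 0) * (F j::real)) = F i"
proof -
  have "(\<Sum>j=1..m+1. (if ereal x \<in> {xs (j-1)<..xs j} then 1 else 0) * F j)
      = (\<Sum>j=1..m+1. if j = i then F i else 0)"
  proof (rule sum.cong[OF refl])
    fix j assume j: "j \<in> {1..m+1}"
    show "(if ereal x \<in> {xs (j-1)<..xs j} then 1 else 0) * F j = (if j = i then F i else 0)"
    proof (cases "ereal x \<in> {xs (j-1)<..xs j}")
      case True
      have "j = i" by (rule uniq_int[OF assms(1) j assms(2) True assms(3)])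
      then show ?thesis using True by simp
    next
      case False
      then have "j \<noteq> i" using assms(3) by metis
      then show ?thesis using False by auto
    qed
  qed
  also have "\<dots> = F i" using assms(2) by simp
  finally show ?thesis .
qed

lemma rep_PQ:
  assumes r: "rep m xs a b c g" shows "g \<in> PQ"
proof -
  have "g x = (\<Sum>i = 1..m + 1. (if ereal x \<in> {xs (i - 1)<..xs i} then 1 else 0) * (a i * x\<^sup>2 + b i * x + c i))" for x
  proof -
    obtain i where i: "i \<in> {1..m+1}" "ereal x \<in> {xs (i-1)<..xs i}" using exist_int[of xs m x] r unfolding rep_def by blast
    show ?thesis
      using sum_eval[of m xs i x "\<lambda>i. a i * x\<^sup>2 + b i * x + c i"] i r unfolding rep_def by auto
  qed
  then have **: "\<forall>x. g x = (\<Sum>i = 1..m + 1. (if ereal x \<in> {xs (i - 1)<..xs i} then 1 else 0) * (a i * x\<^sup>2 + b i * x + c i))"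
    by blast
  have r': "xs 0 = -\<infinity>" "xs (m+1) = \<infinity>" "\<forall>i\<in>{1..m}. \<bar>xs i\<bar> \<noteq> \<infinity>" "\<forall>i\<le>m. xs i \<le> xs (Suc i)"
    using r unfolding rep_def by simp_all
  show ?thesis unfolding PQ_def
    apply (rule CollectI)
    apply (rule exI[of _ m], rule exI[of _ xs], rule exI[of _ a], rule exI[of _ b], rule exI[of _ c])
    using r' ** by (intro conjI)
qed

lemma rep_splice:
  fixes t :: real
  assumes r1: "rep m1 xs1 a1 b1 c1 g1" and r2: "rep m2 xs2 a2 b2 c2 g2"
  defines "xs \<equiv> (\<lambda>i. if i \<le> m1 then min (xs1 i) (ereal t) else max (xs2 (i - (m1+1))) (ereal t))"
    and "A \<equiv> (\<lambda>i. if i \<le> m1+1 then a1 i else a2 (i - (m1+1)))"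
    and "B \<equiv> (\<lambda>i. if i \<le> m1+1 then b1 i else b2 (i - (m1+1)))"
    and "C \<equiv> (\<lambda>i. if i \<le> m1+1 then c1 i else c2 (i - (m1+1)))"
  shows "rep (m1+m2+1) xs A B C (\<lambda>x. if x \<le> t then g1 x else g2 x)"
proof -
  have a1: "xs1 0 = -\<infinity>" "xs1 (m1+1) = \<infinity>" "\<forall>i\<in>{1..m1}. \<bar>xs1 i\<bar> \<noteq> \<infinity>" "\<forall>i\<le>m1. xs1 i \<le> xs1 (Suc i)"
    "\<forall>x i. i \<in> {1..m1+1} \<longrightarrow> ereal x \<in> {xs1 (i-1)<..xs1 i} \<longrightarrow> g1 x = a1 i * x^2 + b1 i * x + c1 i"
    using r1 unfolding rep_def by simp_all
  have a2: "xs2 0 = -\<infinity>" "xs2 (m2+1) = \<infinity>" "\<forall>i\<in>{1..m2}. \<bar>xs2 i\<bar> \<noteq> \<infinity>" "\<forall>i\<le>m2. xs2 i \<le> xs2 (Suc i)"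
    "\<forall>x i. i \<in> {1..m2+1} \<longrightarrow> ereal x \<in> {xs2 (i-1)<..xs2 i} \<longrightarrow> g2 x = a2 i * x^2 + b2 i * x + c2 i"
    using r2 unfolding rep_def by simp_all
  have p1: "xs 0 = -\<infinity>" using a1(1) by (simp add: xs_def)
  have p2: "xs (m1+m2+1+1) = \<infinity>" using a2(2) by (simp add: xs_def)
  have p3: "\<forall>i\<in>{1..m1+m2+1}. \<bar>xs i\<bar> \<noteq> \<infinity>"
  proof
    fix i assume i: "i \<in> {1..m1+m2+1}"
    show "\<bar>xs i\<bar> \<noteq> \<infinity>"
    proof (cases "i \<le> m1")
      case True
      then have "\<bar>xs1 i\<bar> \<noteq> \<infinity>" using a1(3) i by auto
      then show ?thesis using True by (simp add: xs_def min_def)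
    next
      case False
      show ?thesis
      proof (cases "i - (m1+1) = 0")
        case True
        then show ?thesis using False a2(1) by (simp add: xs_def)
      next
        case False2: False
        then have "i - (m1+1) \<in> {1..m2}" using i False by auto
        from bspec[OF a2(3) this] have "\<bar>xs2 (i - (m1+1))\<bar> \<noteq> \<infinity>" .
        then show ?thesis using False by (simp add: xs_def max_def)
      qed
    qed
  qed
  have p4: "\<forall>i\<le>m1+m2+1. xs i \<le> xs (Suc i)"
  proof (intro allI impI)
    fix i assume i: "i \<le> m1+m2+1"
    consider "i < m1" | "i = m1" | "i > m1" by linarith
    then show "xs i \<le> xs (Suc i)"
    proof cases
      case 1
      then have "xs1 i \<le> xs1 (Suc i)" using a1(4) by auto
      then show ?thesis using 1 by (simp add: xs_def min.coboundedI1)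
    next
      case 2
      then show ?thesis using a2(1) by (simp add: xs_def)
    next
      case 3
      then have e: "Suc i - (m1+1) = Suc (i - (m1+1))" by simp
      have "xs2 (i - (m1+1)) \<le> xs2 (Suc (i - (m1+1)))" using a2(4) i 3 by auto
      then show ?thesis using 3 e by (simp add: xs_def max.coboundedI1)
    qed
  qed
  have p5: "\<forall>x i. i \<in> {1..m1+m2+1+1} \<longrightarrow> ereal x \<in> {xs (i-1)<..xs i} \<longrightarrow>
     (if x \<le> t then g1 x else g2 x) = A i * x^2 + B i * x + C i"
  proof (intro allI impI)
    fix x i assume i: "i \<in> {1..m1+m2+1+1}" and xi: "ereal x \<in> {xs (i-1)<..xs i}"
    consider "i \<le> m1" | "i = m1+1" | "i > m1+1" by linarith
    then show "(if x \<le> t then g1 x else g2 x) = A i * x^2 + B i * x + C i"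
    proof cases
      case 1
      then have "i - 1 \<le> m1" by simp
      then have "xs (i-1) = min (xs1 (i-1)) (ereal t)" "xs i = min (xs1 i) (ereal t)" using 1 by (simp_all add: xs_def)
      with xi have "x \<le> t" "ereal x \<in> {xs1 (i-1)<..xs1 i}" by (auto simp: min_less_iff_disj)
      then show ?thesis using a1(5) 1 i by (simp add: A_def B_def C_def)
    next
      case 2
      then have "xs (i-1) = min (xs1 m1) (ereal t)" "xs i = ereal t" using a2(1) by (simp_all add: xs_def)
      with xi have "x \<le> t" "ereal x \<in> {xs1 (i-1)<..xs1 i}" using 2 a1(2) by (auto simp: min_less_iff_disj)
      then show ?thesis using a1(5) 2 by (simp add: A_def B_def C_def)
    next
      case 3
      define j where "j = i - (m1+1)"
      have j: "j \<in> {1..m2+1}" "i - 1 - (m1+1) = j - 1" using 3 i by (auto simp: j_def)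
      have "\<not> i - 1 \<le> m1" using 3 by simp
      then have "xs (i-1) = max (xs2 (j-1)) (ereal t)" "xs i = max (xs2 j) (ereal t)" using 3 j
        by (simp_all add: xs_def j_def)
      with xi have "\<not> x \<le> t" "ereal x \<in> {xs2 (j-1)<..xs2 j}" by (auto simp: le_max_iff_disj)
      then show ?thesis using a2(5) 3 j by (simp add: A_def B_def C_def j_def)
    qed
  qed
  show ?thesis unfolding rep_def using p1 p2 p3 p4 p5 by blast
qed

lemma rep_quad: "rep 0 (\<lambda>i. if i = 0 then -\<infinity> else \<infinity>) (\<lambda>_. a) (\<lambda>_. b) (\<lambda>_. c) (\<lambda>x. a*x^2 + b*x + c)"
  unfolding rep_def by auto

lemma PQI_rep: "g \<in> PQI \<Longrightarrow> \<exists>m xs a b c. rep m xs a b c g"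
proof (induction rule: PQI.induct)
  case (quad a b c)
  then show ?case using rep_quad by blast
next
  case (splice g1 g2 t)
  then show ?case using rep_splice by blast
qed

lemma PQI_PQ: "g \<in> PQI \<Longrightarrow> g \<in> PQ"
  using PQI_rep rep_PQ by blast

definition PSI :: "(real \<Rightarrow> real) set" where
  "PSI = {h. (\<forall>x. 0 \<le> h x) \<and> finite {x. h x \<noteq> 0}}"

lemma PS_finite: "finite S \<Longrightarrow> \<forall>h. (\<forall>x. 0 \<le> h x) \<and> (\<forall>x. x \<notin> S \<longrightarrow> h x = 0) \<longrightarrow> h \<in> PS"
proof (induction S rule: finite_induct)
  case empty
  show ?case
  proof (intro allI impI)
    fix h :: "real \<Rightarrow> real" assume "(\<forall>x. 0 \<le> h x) \<and> (\<forall>x. x \<notin> {} \<longrightarrow> h x = 0)"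
    then have "h = (\<lambda>x. 0)" by auto
    then show "h \<in> PS" unfolding PS_def by (intro CollectI exI[of _ 0]) simp
  qed
next
  case (insert y S)
  show ?case
  proof (intro allI impI)
    fix h :: "real \<Rightarrow> real" assume h: "(\<forall>x. 0 \<le> h x) \<and> (\<forall>x. x \<notin> insert y S \<longrightarrow> h x = 0)"
    define h' where "h' = h(y := 0)"
    have "h' \<in> PS" using insert.IH h unfolding h'_def by auto
    then obtain m :: nat and xs s where ms: "\<forall>i\<in>{1..m}. s i > 0" "\<forall>x. h' x = (\<Sum>i=1..m. s i * (if x = xs i then 1 else 0))"
      unfolding PS_def by blast
    show "h \<in> PS"
    proof (cases "h y = 0")
      case True
      then have "h = h'" unfolding h'_def by auto
      then show ?thesis using \<open>h' \<in> PS\<close> by simp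
    next
      case False
      have "0 \<le> h y" using h[THEN conjunct1] by (rule spec)
      then have hy: "h y > 0" using False by linarith
      define xs' where "xs' = xs(Suc m := y)"
      define s' where "s' = s(Suc m := h y)"
      have "\<forall>i\<in>{1..Suc m}. s' i > 0" using ms(1) hy by (auto simp: s'_def)
      moreover have "h x = (\<Sum>i=1..Suc m. s' i * (if x = xs' i then 1 else 0))" for x
      proof -
        have "(\<Sum>i=1..Suc m. s' i * (if x = xs' i then 1 else 0))
            = (\<Sum>i=1..m. s' i * (if x = xs' i then 1 else 0)) + h y * (if x = y then 1 else 0)"
          by (simp add: s'_def xs'_def)
        also have "(\<Sum>i=1..m. s' i * (if x = xs' i then 1 else 0)) = (\<Sum>i=1..m. s i * (if x = xs i then 1 else 0))"
          by (rule sum.cong) (auto simp: s'_def xs'_def)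
        also have "\<dots> = h' x" using ms(2) by simp
        finally show ?thesis by (simp add: h'_def)
      qed
      ultimately show ?thesis unfolding PS_def by blast
    qed
  qed
qed

lemma PSI_PS: "h \<in> PSI \<Longrightarrow> h \<in> PS"
  unfolding PSI_def using PS_finite[of "{x. h x \<noteq> 0}"] by auto

definition PFI :: "(real \<Rightarrow> real) set" where
  "PFI = {g. \<exists>q\<in>PQI. \<exists>s\<in>PSI. g = (\<lambda>x. q x + s x)}"

lemma PFI_PF: "g \<in> PFI \<Longrightarrow> g \<in> PF"
  unfolding PFI_def PF_def using PQI_PQ PSI_PS by blast

lemma PSI_add: "s1 \<in> PSI \<Longrightarrow> s2 \<in> PSI \<Longrightarrow> (\<lambda>x. s1 x + s2 x) \<in> PSI"
proof -
  assume a: "s1 \<in> PSI" "s2 \<in> PSI"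
  have "{x. s1 x + s2 x \<noteq> 0} \<subseteq> {x. s1 x \<noteq> 0} \<union> {x. s2 x \<noteq> 0}" by auto
  moreover have "finite ({x. s1 x \<noteq> 0} \<union> {x. s2 x \<noteq> 0})" using a unfolding PSI_def by simp
  ultimately have "finite {x. s1 x + s2 x \<noteq> 0}" by (rule finite_subset)
  moreover have "\<forall>x. 0 \<le> s1 x + s2 x" using a unfolding PSI_def by (simp add: add_nonneg_nonneg)
  ultimately show ?thesis unfolding PSI_def by simp
qed

lemma PFI_add: "g \<in> PFI \<Longrightarrow> h \<in> PFI \<Longrightarrow> (\<lambda>x. g x + h x) \<in> PFI"
proof -
  assume a: "g \<in> PFI" "h \<in> PFI"
  obtain q1 s1 where 1: "q1 \<in> PQI" "s1 \<in> PSI" "g = (\<lambda>x. q1 x + s1 x)"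
    using a(1) unfolding PFI_def by blast
  obtain q2 s2 where 2: "q2 \<in> PQI" "s2 \<in> PSI" "h = (\<lambda>x. q2 x + s2 x)"
    using a(2) unfolding PFI_def by blast
  have eq: "(\<lambda>x. g x + h x) = (\<lambda>x. (\<lambda>x. q1 x + q2 x) x + (\<lambda>x. s1 x + s2 x) x)"
    unfolding 1(3) 2(3) by (simp add: algebra_simps)
  show ?thesis unfolding PFI_def mem_Collect_eq
    apply (rule bexI[OF _ PQI_add[OF 1(1) 2(1)]])
    apply (rule bexI[OF _ PSI_add[OF 1(2) 2(2)]])
    by (rule eq)
qed

lemma PFI_max: "g \<in> PFI \<Longrightarrow> (\<lambda>x. max (g x) c) \<in> PFI"
proof -
  assume "g \<in> PFI"
  then obtain q s where qs: "q \<in> PQI" "s \<in> PSI" "g = (\<lambda>x. q x + s x)" unfolding PFI_def by blast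
  define r where "r = (\<lambda>x. max (q x + s x) c - max (q x) c)"
  have s0: "0 \<le> s x" for x using qs(2) unfolding PSI_def by auto
  have "{x. r x \<noteq> 0} \<subseteq> {x. s x \<noteq> 0}" unfolding r_def by auto
  moreover have "finite {x. s x \<noteq> 0}" using qs(2) unfolding PSI_def by simp
  ultimately have "finite {x. r x \<noteq> 0}" by (rule finite_subset)
  moreover have "\<forall>x. 0 \<le> r x"
  proof
    fix x
    have "max (q x) c \<le> max (q x + s x) c" unfolding max_def using s0[of x] by auto
    then show "0 \<le> r x" unfolding r_def by simp
  qed
  ultimately have "r \<in> PSI" unfolding PSI_def by simp
  moreover have eq: "(\<lambda>x. max (g x) c) = (\<lambda>x. (\<lambda>x. max (q x) c) x + r x)" unfolding r_def qs(3) by simp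
  ultimately show ?thesis unfolding PFI_def mem_Collect_eq
    apply -
    apply (rule bexI[OF _ PQI_max[OF qs(1), of c]])
    apply (rule bexI[of _ r])
    by simp_all
qed

lemma e_PFI: "0 \<le> lam0 \<Longrightarrow> e_fn nw ybar lam0 i \<in> PFI"
proof -
  assume l: "0 \<le> lam0"
  define n where "n = real (nw i)"
  define y where "y = ybar i"
  have q: "(\<lambda>x. (-n/2)*x^2 + (n*y)*x + (-n/2*y^2)) \<in> PQI" by (rule PQI.quad)
  have s: "(\<lambda>x. lam0 * (if x = 0 then 1 else 0)) \<in> PSI"
  proof -
    have "{x. lam0 * (if x = 0 then 1 else 0) \<noteq> (0::real)} \<subseteq> {0}" by auto
    then have "finite {x. lam0 * (if x = 0 then 1 else 0) \<noteq> (0::real)}" by (rule finite_subset) simp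
    then show ?thesis unfolding PSI_def using l by simp
  qed
  have "e_fn nw ybar lam0 i = (\<lambda>x. (\<lambda>x. (-n/2)*x^2 + (n*y)*x + (-n/2*y^2)) x + (\<lambda>x. lam0 * (if x = 0 then 1 else 0)) x)"
    unfolding e_fn_def n_def y_def by (simp add: fun_eq_iff power2_eq_square algebra_simps)
  then show ?thesis unfolding PFI_def mem_Collect_eq
    apply -
    apply (rule bexI[OF _ q])
    apply (rule bexI[OF _ s])
    by simp_all
qed

lemma e_le: "0 \<le> lam0 \<Longrightarrow> e_fn nw ybar lam0 i x \<le> lam0"
proof -
  assume "0 \<le> lam0"
  then have B: "lam0 * (if x = 0 then 1 else 0) \<le> lam0" by simp
  have A: "- (real (nw i) / 2) * (x - ybar i)^2 \<le> 0" by simp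
  show ?thesis unfolding e_fn_def using A B by linarith
qed

lemma fstep_max:
  assumes bdd: "bdd_above (range d)" and l: "0 \<le> lam"
  shows "fstep lam d = (\<lambda>b. max (d b) (Sup (range d) - lam))"
proof
  fix b
  define g where "g = (\<lambda>bt. d bt - lam * (if b \<noteq> bt then 1 else 0))"
  have gle: "g bt \<le> d bt" for bt using l by (simp add: g_def)
  have gge: "d bt - lam \<le> g bt" for bt using l by (simp add: g_def)
  have bddg: "bdd_above (range g)"
  proof -
    obtain B where "\<forall>x\<in>range d. x \<le> B" using bdd by (auto simp: bdd_above_def)
    then have "\<forall>x\<in>range g. x \<le> B" using gle by (auto intro: order.trans)
    then show ?thesis by (auto simp: bdd_above_def)
  qed
  have dS: "d bt \<le> Sup (range d)" for bt using bdd by (simp add: cSup_upper)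
  have "Sup (range g) = max (d b) (Sup (range d) - lam)"
  proof (rule antisym)
    show "Sup (range g) \<le> max (d b) (Sup (range d) - lam)"
    proof (rule cSUP_least)
      fix bt
      show "g bt \<le> max (d b) (Sup (range d) - lam)"
        using dS[of bt] by (cases "b = bt") (auto simp: g_def)
    qed simp
    have "d b = g b" by (simp add: g_def)
    also have "\<dots> \<le> Sup (range g)" using bddg by (simp add: cSup_upper)
    finally have 1: "d b \<le> Sup (range g)" .
    have "Sup (range d) \<le> Sup (range g) + lam"
    proof (rule cSUP_least)
      fix bt
      have "g bt \<le> Sup (range g)" using bddg by (simp add: cSup_upper)
      then show "d bt \<le> Sup (range g) + lam" using gge[of bt] by linarith
    qed simp
    then show "max (d b) (Sup (range d) - lam) \<le> Sup (range g)" using 1 by simp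
  qed
  then show "fstep lam d b = max (d b) (Sup (range d) - lam)"
    unfolding fstep_def g_def by simp
qed

theorem lemmaA1:
  fixes p :: nat and ybar :: "nat \<Rightarrow> real" and nw :: "nat \<Rightarrow> nat"
    and lam0 lam :: real
  assumes "p \<ge> 1"
    and "\<forall>i\<in>{1..p}. nw i \<ge> 1"
    and "lam0 \<ge> 0" and "lam \<ge> 0"
  shows "(\<forall>k\<in>{1..p}. delta_fn nw ybar lam0 lam k \<in> PF)
       \<and> (\<forall>k\<in>{2..p}. f_fn nw ybar lam0 lam k \<in> PF)"
proof -
  have main: "delta_fn nw ybar lam0 lam (Suc j) \<in> PFI \<and> bdd_above (range (delta_fn nw ybar lam0 lam (Suc j)))" for j
  proof (induction j)
    case 0
    have "delta_fn nw ybar lam0 lam (Suc 0) = e_fn nw ybar lam0 1" by simp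
    moreover have "bdd_above (range (e_fn nw ybar lam0 1))"
      by (rule bdd_aboveI2[of _ _ lam0]) (rule e_le[OF assms(3)])
    ultimately show ?case using e_PFI[OF assms(3)] by simp
  next
    case (Suc j)
    define d where "d = delta_fn nw ybar lam0 lam (Suc j)"
    define M where "M = Sup (range d)"
    have IH: "d \<in> PFI" "bdd_above (range d)" using Suc.IH unfolding d_def by simp_all
    have fs: "fstep lam d = (\<lambda>b. max (d b) (M - lam))" unfolding M_def using fstep_max[OF IH(2) assms(4)] .
    have eq: "delta_fn nw ybar lam0 lam (Suc (Suc j)) = (\<lambda>x. e_fn nw ybar lam0 (Suc (Suc j)) x + (\<lambda>b. max (d b) (M - lam)) x)"
      using fs unfolding d_def by simp
    have mem: "delta_fn nw ybar lam0 lam (Suc (Suc j)) \<in> PFI"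
      unfolding eq by (rule PFI_add[OF e_PFI[OF assms(3)] PFI_max[OF IH(1)]])
    have "e_fn nw ybar lam0 (Suc (Suc j)) x + max (d x) (M - lam) \<le> lam0 + M" for x
    proof -
      have "d x \<le> M" unfolding M_def using IH(2) by (simp add: cSup_upper)
      then have "max (d x) (M - lam) \<le> M" using assms(4) by simp
      moreover have "e_fn nw ybar lam0 (Suc (Suc j)) x \<le> lam0" by (rule e_le[OF assms(3)])
      ultimately show ?thesis by linarith
    qed
    then have "bdd_above (range (delta_fn nw ybar lam0 lam (Suc (Suc j))))"
      unfolding eq by (intro bdd_aboveI2[of _ _ "lam0 + M"]) simp
    then show ?case using mem by simp
  qed
  have c1: "\<forall>k\<in>{1..p}. delta_fn nw ybar lam0 lam k \<in> PF"
  proof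
    fix k assume "k \<in> {1..p}"
    then have "k = Suc (k - 1)" by simp
    then show "delta_fn nw ybar lam0 lam k \<in> PF" using main[of "k-1"] PFI_PF by metis
  qed
  have c2: "\<forall>k\<in>{2..p}. f_fn nw ybar lam0 lam k \<in> PF"
  proof
    fix k assume "k \<in> {2..p}"
    then have k: "k - 1 = Suc (k - 2)" by auto
    define d where "d = delta_fn nw ybar lam0 lam (k - 1)"
    have IH: "d \<in> PFI" "bdd_above (range d)" using main[of "k-2"] unfolding d_def k by simp_all
    have "f_fn nw ybar lam0 lam k = (\<lambda>b. max (d b) (Sup (range d) - lam))"
      unfolding f_fn_def d_def[symmetric] using fstep_max[OF IH(2) assms(4)] .
    moreover have "(\<lambda>b. max (d b) (Sup (range d) - lam)) \<in> PFI" by (rule PFI_max[OF IH(1)])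
    ultimately show "f_fn nw ybar lam0 lam k \<in> PF" using PFI_PF by simp
  qed
  show ?thesis using c1 c2 by blast
qed

end
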